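(* Let $u_0\in C^1(\Omega_x)\cap\mathcal U$ and suppose $T>0$ is such that the classical solution $u(\cdot,t)=u_0\circ X^{-1}(\cdot,t)$, $t\in\Omega_t$, exists, where $X(x,t)=x+t\,F'(u_0(x))$ is the classical characteristic map (strictly increasing in $x$ for $t\in\Omega_t$). Then for every $K\in\mathbb N$ there is a LRNR $H_r$ with rank $r=3$, degrees of freedom $K$, width $M\sim K$ and depth $L=2$, together with coefficient functions $\gamma(t),\theta(t)$ each of which is linear or constant in $t$, such that $h(t):=h(\gamma(t),\theta(t))\in H_r$ satisfies, for all $t\in\Omega_t$, $$\|u(\cdot,t)-h(t)\|_{L^1(\Omega_x)}\lesssim\frac1K|u_0|_{TV(\Omega_x)}\Big(1+T\|F''\|_{L^\infty(u_0(\Omega_x))}\|u_0'\|_{L^\infty(\Omega_x)}\Big),$$ with an implicit constant independent of $K$, $u_0$, $F$ and $T$.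
   Context: $\Omega_x=(0,1)$, $\Omega_t=(0,T)$, $F\in C^\infty(\mathbb{R})$ strictly convex; $\mathcal U$ is the set of functions of bounded variation on $\Omega_x$ with compact support in $\Omega_x$. $u$ solves $\partial_t u+\partial_x(F(u))=0$, $u(\cdot,0)=u_0$, $u(0,t)=u(1,t)=0$. LRNR (low rank neural representation): fix depth $L$ and widths $M_0=1,M_1,\dots,M_{L-1},M_L=1$, width $M=\max_\ell M_\ell$. A feedforward network is $h(x;W,B)=A^L\circ\sigma\odot A^{L-1}\circ\cdots\circ\sigma\odot A^1(x)$ with $A^\ell(z)=W^\ell z+B^\ell$, $W^\ell\in\mathbb{R}^{M_\ell\times M_{\ell-1}}$, $B^\ell\in\mathbb{R}^{M_\ell}$, and $\sigma(x)=\max\{0,x\}$ applied entrywise. A LRNR of rank $r$ is given by fixed $U_1^\ell,\dots,U_r^\ell$ (weight-shaped) and $V_1^\ell,\dots,V_r^\ell$ (bias-shaped) for each layer $\ell$, each a product $a\bullet b$ of two vectors with $\bullet\in\{\otimes,\otimes_d,{}_d\otimes\}$, where $\otimes$ is the Kronecker product, $a\otimes_d b:=a\otimes\mathrm{diag}(b)$, $a\,{}_d\!\otimes b:=\mathrm{diag}(a)\otimes b$; and coefficient sets $C^\ell,D^\ell\subset\mathbb{R}^r$. Its members are $h(\gamma,\theta):=h(\cdot;W,B)$ with $W^\ell=\sum_{i=1}^r\gamma_i^\ell U_i^\ell$, $B^\ell=\sum_{i=1}^r\theta_i^\ell V_i^\ell$. The degrees of freedom $K$ is the number of stored (unconstrained)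 real parameters defining the $U_i^\ell,V_i^\ell$. *)

theory Defs
  imports "HOL-Analysis.Analysis"
begin

type_synonym rmat = "nat \<times> nat \<times> (nat \<Rightarrow> nat \<Rightarrow> real)"

definition nrows :: "rmat \<Rightarrow> nat" where "nrows A = fst A"
definition ncols :: "rmat \<Rightarrow> nat" where "ncols A = fst (snd A)"
definition ent :: "rmat \<Rightarrow> nat \<Rightarrow> nat \<Rightarrow> real" where "ent A = snd (snd A)"

definition is_vecm :: "rmat \<Rightarrow> bool" where
  "is_vecm A \<longleftrightarrow> nrows A = 1 \<or> ncols A = 1"
definition vlen :: "rmat \<Rightarrow> nat" where "vlen A = nrows A * ncols A"
definition ventry :: "rmat \<Rightarrow> nat \<Rightarrow> real" where
  "ventry A k = (if ncols A = 1 then ent A k 0 else ent A 0 k)"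

definition diagm :: "rmat \<Rightarrow> rmat" where
  "diagm a = (vlen a, vlen a, \<lambda>i j. if i = j then ventry a i else 0)"

definition kron :: "rmat \<Rightarrow> rmat \<Rightarrow> rmat" where
  "kron A B = (nrows A * nrows B, ncols A * ncols B,
     \<lambda>i j. ent A (i div nrows B) (j div ncols B) * ent B (i mod nrows B) (j mod ncols B))"

datatype kprod = Kron | KronD | DKron

type_synonym factor = "kprod \<times> rmat \<times> rmat"

fun fmat :: "factor \<Rightarrow> rmat" where
  "fmat (Kron, a, b) = kron a b"
| "fmat (KronD, a, b) = kron a (diagm b)"
| "fmat (DKron, a, b) = kron (diagm a) b"

fun factor_ok :: "factor \<Rightarrow> bool" where
  "factor_ok (_, a, b) \<longleftrightarrow> is_vecm a \<and> is_vecm b"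

fun fdof :: "factor \<Rightarrow> nat" where
  "fdof (_, a, b) = vlen a + vlen b"

text \<open>widths ws = [M_0, ..., M_L]; W l is the weight matrix of layer l (entries W l j k,
  j < M_l, k < M_{l-1}), B l j the bias of layer l. zlayer .. l is the post-activation
  output of layer l (z_0 = input).\<close>
fun zlayer :: "nat list \<Rightarrow> (nat \<Rightarrow> nat \<Rightarrow> nat \<Rightarrow> real) \<Rightarrow> (nat \<Rightarrow> nat \<Rightarrow> real)
                 \<Rightarrow> real \<Rightarrow> nat \<Rightarrow> nat \<Rightarrow> real" where
  "zlayer ws W B x 0 = (\<lambda>j. x)"
| "zlayer ws W B x (Suc l) =
     (\<lambda>j. max 0 ((\<Sum>k<ws ! l. W (Suc l) j k * zlayer ws W B x l k) + B (Suc l) j))"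

definition ffnn :: "nat list \<Rightarrow> (nat \<Rightarrow> nat \<Rightarrow> nat \<Rightarrow> real) \<Rightarrow> (nat \<Rightarrow> nat \<Rightarrow> real)
                 \<Rightarrow> real \<Rightarrow> real" where
  "ffnn ws W B x =
     (let L = length ws - 1 in
      (\<Sum>k<ws ! (L - 1). W L 0 k * zlayer ws W B x (L - 1) k) + B L 0)"

text \<open>An LRNR of depth L, widths ws, rank r: factors U l i (weight-shaped), V l i
  (bias-shaped) for layers l \<in> {1..L}, i < r, and coefficient sets Cs l, Ds l \<subseteq> R^r
  (vectors in R^r represented as real lists of length r).\<close>
definition is_lrnr :: "nat \<Rightarrow> nat list \<Rightarrow> nat \<Rightarrow> (nat \<Rightarrow> nat \<Rightarrow> factor) \<Rightarrow> (nat \<Rightarrow> nat \<Rightarrow> factor)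
                       \<Rightarrow> (nat \<Rightarrow> real list set) \<Rightarrow> (nat \<Rightarrow> real list set) \<Rightarrow> bool" where
  "is_lrnr L ws r U V Cs Ds \<longleftrightarrow>
     L \<ge> 1 \<and> length ws = L + 1 \<and> ws ! 0 = 1 \<and> ws ! L = 1 \<and>
     (\<forall>l\<in>{1..L}.
        Cs l \<subseteq> {v. length v = r} \<and> Ds l \<subseteq> {v. length v = r} \<and>
        (\<forall>i<r. factor_ok (U l i) \<and> nrows (fmat (U l i)) = ws ! l \<and>
                ncols (fmat (U l i)) = ws ! (l - 1) \<and>
                factor_ok (V l i) \<and> nrows (fmat (V l i)) = ws ! l \<and>
                ncols (fmat (V l i)) = 1))"

definition lrnr_dof :: "nat \<Rightarrow> nat \<Rightarrow> (nat \<Rightarrow> nat \<Rightarrow> factor) \<Rightarrow> (nat \<Rightarrow> nat \<Rightarrow> factor) \<Rightarrow> nat" where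
  "lrnr_dof L r U V = (\<Sum>l\<in>{1..L}. \<Sum>i<r. fdof (U l i) + fdof (V l i))"

definition lrnr_width :: "nat list \<Rightarrow> nat" where
  "lrnr_width ws = Max (set ws)"

definition lrnr_h :: "nat list \<Rightarrow> nat \<Rightarrow> (nat \<Rightarrow> nat \<Rightarrow> factor) \<Rightarrow> (nat \<Rightarrow> nat \<Rightarrow> factor)
                      \<Rightarrow> (nat \<Rightarrow> real list) \<Rightarrow> (nat \<Rightarrow> real list) \<Rightarrow> real \<Rightarrow> real" where
  "lrnr_h ws r U V \<gamma> \<theta> x =
     ffnn ws (\<lambda>l j k. \<Sum>i<r. \<gamma> l ! i * ent (fmat (U l i)) j k)
             (\<lambda>l j. \<Sum>i<r. \<theta> l ! i * ent (fmat (V l i)) j 0) x"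

text \<open>Membership h(gamma, theta) \<in> H_r: coefficients lie in the coefficient sets.\<close>
definition lrnr_coeffs_ok :: "nat \<Rightarrow> (nat \<Rightarrow> real list set) \<Rightarrow> (nat \<Rightarrow> real list set)
                              \<Rightarrow> (nat \<Rightarrow> real list) \<Rightarrow> (nat \<Rightarrow> real list) \<Rightarrow> bool" where
  "lrnr_coeffs_ok L Cs Ds \<gamma> \<theta> \<longleftrightarrow> (\<forall>l\<in>{1..L}. \<gamma> l \<in> Cs l \<and> \<theta> l \<in> Ds l)"

definition smooth_fun :: "(real \<Rightarrow> real) \<Rightarrow> bool" where
  "smooth_fun F \<longleftrightarrow> (\<forall>n x. ((deriv ^^ n) F) differentiable (at x))"

definition strictly_convex :: "(real \<Rightarrow> real) \<Rightarrow> bool" where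
  "strictly_convex F \<longleftrightarrow>
     (\<forall>x y u. x \<noteq> y \<longrightarrow> 0 < u \<longrightarrow> u < 1 \<longrightarrow>
        F (u * x + (1 - u) * y) < u * F x + (1 - u) * F y)"

definition variation_sums :: "(real \<Rightarrow> real) \<Rightarrow> real set \<Rightarrow> real set" where
  "variation_sums u S =
     {\<Sum>i<length xs - 1. \<bar>u (xs ! Suc i) - u (xs ! i)\<bar> | xs. sorted xs \<and> set xs \<subseteq> S}"

definition bounded_variation_on :: "(real \<Rightarrow> real) \<Rightarrow> real set \<Rightarrow> bool" where
  "bounded_variation_on u S \<longleftrightarrow> bdd_above (variation_sums u S)"

definition total_variation :: "(real \<Rightarrow> real) \<Rightarrow> real set \<Rightarrow> real" where
  "total_variation u S = Sup (variation_sums u S)"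

definition compact_support_in :: "(real \<Rightarrow> real) \<Rightarrow> real set \<Rightarrow> bool" where
  "compact_support_in u S \<longleftrightarrow>
     compact (closure {x\<in>S. u x \<noteq> 0}) \<and> closure {x\<in>S. u x \<noteq> 0} \<subseteq> S"

text \<open>Extension of u_0 by zero outside Omega_x = (0,1).\<close>
definition u0ext :: "(real \<Rightarrow> real) \<Rightarrow> real \<Rightarrow> real" where
  "u0ext u0 y = (if 0 < y \<and> y < 1 then u0 y else 0)"

definition char_map :: "(real \<Rightarrow> real) \<Rightarrow> (real \<Rightarrow> real) \<Rightarrow> real \<Rightarrow> real \<Rightarrow> real" where
  "char_map F u0 y t = y + t * deriv F (u0ext u0 y)"

definition classical_solution :: "(real \<Rightarrow> real) \<Rightarrow> (real \<Rightarrow> real) \<Rightarrow> real \<Rightarrow> real \<Rightarrow> real" where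
  "classical_solution F u0 x t =
     (if \<exists>y. char_map F u0 y t = x then u0ext u0 (THE y. char_map F u0 y t = x) else 0)"

end

theory Submission
  imports Defs
begin

definition colv :: "nat \<Rightarrow> (nat \<Rightarrow> real) \<Rightarrow> rmat" where "colv n f = (n, 1, \<lambda>i j. f i)"
definition rowv :: "nat \<Rightarrow> (nat \<Rightarrow> real) \<Rightarrow> rmat" where "rowv n f = (1, n, \<lambda>i j. f j)"
definition one11 :: rmat where "one11 = (1, 1, \<lambda>i j. 1)"

definition mkU :: "nat \<Rightarrow> real \<Rightarrow> (nat \<Rightarrow> real) \<Rightarrow> nat \<Rightarrow> nat \<Rightarrow> factor" where
  "mkU M w e l i = (if l = 1 then (Kron, colv M (\<lambda>_. w), one11) else (Kron, rowv M e, one11))"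
definition mkV :: "nat \<Rightarrow> (nat \<Rightarrow> real) \<Rightarrow> (nat \<Rightarrow> real) \<Rightarrow> nat \<Rightarrow> nat \<Rightarrow> factor" where
  "mkV M c0 c1 l i = (if l = 1 then (if i = 0 then (Kron, colv M c0, one11) else (Kron, colv M c1, one11))
      else (Kron, colv 1 (\<lambda>_. 0), one11))"
definition gam :: "real \<Rightarrow> nat \<Rightarrow> real list" where "gam t l = [1, 0, 0]"
definition tht :: "real \<Rightarrow> nat \<Rightarrow> real list" where "tht t l = (if l = 1 then [1, t, 0] else [0, 0, 0])"

lemma ent_kc: "ent (kron (colv M f) one11) i j = f i"
  by (simp add: kron_def ent_def colv_def one11_def nrows_def ncols_def)
lemma ent_kr: "ent (kron (rowv M f) one11) i j = f j"
  by (simp add: kron_def ent_def rowv_def one11_def nrows_def ncols_def)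

lemma net_eval:
  "lrnr_h [1, M, 1] 3 (mkU M w e) (mkV M c0 c1) (gam t) (tht t) x =
     (\<Sum>k<M. e k * max 0 (w * x + (t * c1 k + c0 k)))"
  by (simp add: lrnr_h_def ffnn_def numeral_3_eq_3 lessThan_Suc mkU_def mkV_def gam_def tht_def ent_kc ent_kr)

lemma net_lrnr: "M \<ge> 1 \<Longrightarrow> is_lrnr 2 [1, M, 1] 3 (mkU M w e) (mkV M c0 c1) (\<lambda>_. {v. length v = 3}) (\<lambda>_. {v. length v = 3})"
  by (auto simp: is_lrnr_def mkU_def mkV_def kron_def colv_def rowv_def one11_def nrows_def ncols_def
      is_vecm_def diagm_def)

lemma net_dof: "lrnr_dof 2 3 (mkU M w e) (mkV M c0 c1) = 9 * M + 15"
  by (simp add: lrnr_dof_def numeral_3_eq_3 lessThan_Suc mkU_def mkV_def colv_def rowv_def one11_def vlen_def nrows_def ncols_def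
     numeral_2_eq_2 atLeastAtMostSuc_conv)

lemma net_width: "M \<ge> 1 \<Longrightarrow> lrnr_width [1, M, 1] = M"
  by (simp add: lrnr_width_def)

lemma net_coeffs: "lrnr_coeffs_ok 2 (\<lambda>_. {v. length v = 3}) (\<lambda>_. {v. length v = 3}) (gam t) (tht t)"
  by (simp add: lrnr_coeffs_ok_def gam_def tht_def)

lemma net_lin: "(\<forall>l\<in>{1..2}. \<forall>i<3. \<exists>a b. \<forall>t. gam t l ! i = a + b * t) \<and>
         (\<forall>l\<in>{1..2}. \<forall>i<3. \<exists>a b. \<forall>t. tht t l ! i = a + b * t)"
proof -
  have "\<forall>l\<in>{1..2::nat}. \<forall>i<3. \<forall>t. gam t l ! i = gam 0 l ! i + (gam 1 l ! i - gam 0 l ! i) * t"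
    by (auto simp: gam_def less_Suc_eq numeral_3_eq_3)
  moreover have "\<forall>l\<in>{1..2::nat}. \<forall>i<3. \<forall>t. tht t l ! i = tht 0 l ! i + (tht 1 l ! i - tht 0 l ! i) * t"
    by (auto simp: tht_def less_Suc_eq numeral_3_eq_3)
  ultimately show ?thesis by blast
qed

definition rmp :: "real \<Rightarrow> real \<Rightarrow> real \<Rightarrow> real" where
  "rmp w z x = max 0 (w * (x - z)) - max 0 (w * (x - z) - 1)"

lemma step_ramp:
  assumes "w > 0"
  shows "\<bar>(if z \<le> x then 1 else 0) - rmp w z x\<bar> \<le> indicator {z..<z+1/w} x"
proof (cases "x < z")
  case True
  then have "w * (x - z) < 0" using assms by (simp add: mult_pos_neg)
  then show ?thesis using True by (simp add: rmp_def)
next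
  case False
  show ?thesis
  proof (cases "x < z + 1/w")
    case True
    have a: "0 \<le> w * (x - z)" using False assms by simp
    have "w * (x - z) < w * (1/w)" using True assms by (intro mult_strict_left_mono) auto
    then have b: "w * (x - z) < 1" using assms by simp
    show ?thesis using a b False True by (simp add: rmp_def indicator_def)
  next
    case F2: False
    have "w * (1/w) \<le> w * (x - z)" using F2 assms by (intro mult_left_mono) auto
    then have b: "1 \<le> w * (x - z)" using assms by simp
    show ?thesis using b False F2 by (simp add: rmp_def indicator_def)
  qed
qed

lemma cell_exists:
  fixes z :: "nat \<Rightarrow> real"
  assumes "strict_mono z" "z 0 \<le> x" "x < z N"
  shows "\<exists>k<N. z k \<le> x \<and> x < z (Suc k)"
  using assms(3)
proof (induction N)
  case 0 then show ?case using assms(2) by simp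
next
  case (Suc N)
  show ?case
  proof (cases "x < z N")
    case True then show ?thesis using Suc.IH by (meson less_Suc_eq)
  next
    case False then show ?thesis using Suc.prems by auto
  qed
qed

lemma core_pointwise:
  fixes z v osc :: "nat \<Rightarrow> real" and u :: "real \<Rightarrow> real"
  assumes zm: "strict_mono z" and w: "w > 0"
    and osc0: "\<And>k. osc k \<ge> 0"
    and left: "\<And>x. x < z 0 \<Longrightarrow> u x = 0" and right: "\<And>x. x \<ge> z N \<Longrightarrow> u x = 0"
    and v0: "v 0 = 0" and vN: "v N = 0"
    and cell: "\<And>k x. k < N \<Longrightarrow> z k \<le> x \<Longrightarrow> x < z (Suc k) \<Longrightarrow> \<bar>u x - v k\<bar> \<le> osc k"
    and dv: "\<And>k. k < N \<Longrightarrow> \<bar>v (Suc k) - v k\<bar> \<le> osc k"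
  shows "\<bar>u x - (\<Sum>k<N. (v (Suc k) - v k) * rmp w (z (Suc k)) x)\<bar>
     \<le> (\<Sum>k<N. osc k * indicator {z k..<z (Suc k)} x) + (\<Sum>k<N. osc k * indicator {z (Suc k)..<z (Suc k) + 1/w} x)"
proof -
  define g where "g = (\<Sum>k<N. (v (Suc k) - v k) * (if z (Suc k) \<le> x then 1 else 0))"
  have E1nn: "(\<Sum>k<N. osc k * indicator {z k..<z (Suc k)} x) \<ge> 0"
    using osc0 by (intro sum_nonneg) auto
  have ug: "\<bar>u x - g\<bar> \<le> (\<Sum>k<N. osc k * indicator {z k..<z (Suc k)} x)"
  proof (cases "x < z 0")
    case True
    have "\<And>k. \<not> z (Suc k) \<le> x" using True zm by (smt (verit) strict_mono_less zero_less_Suc)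
    then have "g = 0" by (simp add: g_def)
    then show ?thesis using True left E1nn by simp
  next
    case F: False
    show ?thesis
    proof (cases "x < z N")
      case False
      have "\<And>k. k < N \<Longrightarrow> z (Suc k) \<le> x" using False zm
        by (smt (verit) Suc_leI strict_mono_less_eq)
      then have "g = (\<Sum>k<N. v (Suc k) - v k)" by (simp add: g_def)
      also have "\<dots> = 0" using v0 vN by (simp add: sum_lessThan_telescope)
      finally show ?thesis using False right E1nn by simp
    next
      case True
      then obtain k where k: "k < N" "z k \<le> x" "x < z (Suc k)"
        using cell_exists[OF zm, of x N] F by auto
      have "\<And>j. (z (Suc j) \<le> x) = (j < k)"
      proof -
        fix j
        show "(z (Suc j) \<le> x) = (j < k)"
        proof
          assume "z (Suc j) \<le> x"
          then have "z (Suc j) < z (Suc k)" using k by simp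
          then show "j < k" using zm by (simp add: strict_mono_less)
        next
          assume "j < k"
          then have "z (Suc j) \<le> z k" using zm by (simp add: strict_mono_less_eq)
          then show "z (Suc j) \<le> x" using k by simp
        qed
      qed
      then have "g = (\<Sum>j<N. if j < k then v (Suc j) - v j else 0)" by (simp add: g_def if_distrib cong: if_cong)
      also have "\<dots> = (\<Sum>j\<in>{..<N} \<inter> {j. j < k}. v (Suc j) - v j)"
        by (simp add: sum.inter_restrict)
      also have "{..<N} \<inter> {j. j < k} = {..<k}" using k by auto
      also have "(\<Sum>j<k. v (Suc j) - v j) = v k" using v0 by (simp add: sum_lessThan_telescope)
      finally have gk: "g = v k" .
      have "osc k = osc k * indicator {z k..<z (Suc k)} x" using k by simp
      also have "\<dots> \<le> (\<Sum>k<N. osc k * indicator {z k..<z (Suc k)} x)"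
        using k osc0 by (intro member_le_sum) auto
      finally show ?thesis using gk cell[OF k] by simp
    qed
  qed
  have "g - (\<Sum>k<N. (v (Suc k) - v k) * rmp w (z (Suc k)) x)
      = (\<Sum>k<N. (v (Suc k) - v k) * ((if z (Suc k) \<le> x then 1 else 0) - rmp w (z (Suc k)) x))"
    by (simp add: g_def sum_subtractf[symmetric] right_diff_distrib)
  then have "\<bar>g - (\<Sum>k<N. (v (Suc k) - v k) * rmp w (z (Suc k)) x)\<bar>
      \<le> (\<Sum>k<N. \<bar>(v (Suc k) - v k) * ((if z (Suc k) \<le> x then 1 else 0) - rmp w (z (Suc k)) x)\<bar>)"
    by (simp add: sum_abs)
  also have "\<dots> \<le> (\<Sum>k<N. osc k * indicator {z (Suc k)..<z (Suc k) + 1/w} x)"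
  proof (intro sum_mono)
    fix k assume "k \<in> {..<N}"
    then show "\<bar>(v (Suc k) - v k) * ((if z (Suc k) \<le> x then 1 else 0) - rmp w (z (Suc k)) x)\<bar>
      \<le> osc k * indicator {z (Suc k)..<z (Suc k) + 1/w} x"
      unfolding abs_mult using dv step_ramp[OF w, of "z (Suc k)" x] osc0
      by (intro mult_mono) auto
  qed
  finally show ?thesis using ug by linarith
qed

lemma int_ind: "integrable lborel (\<lambda>x. c * indicator {a..<b::real} x :: real)"
proof (cases "a \<le> b")
  case True then show ?thesis by (intro integrable_mult_right integrable_real_indicator) auto
next
  case False then have "{a..<b} = {}" by auto
  then show ?thesis by simp
qed

lemma integ_E:
  fixes z osc :: "nat \<Rightarrow> real" and N :: nat
  assumes zm: "strict_mono z" and w: "w > 0"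
  defines "E \<equiv> \<lambda>x. (\<Sum>k<N. osc k * indicator {z k..<z (Suc k)} x) + (\<Sum>k<N. osc k * indicator {z (Suc k)..<z (Suc k) + 1/w} x)"
  shows "integrable lborel E"
    "integral\<^sup>L lborel E = (\<Sum>k<N. osc k * (z (Suc k) - z k)) + (\<Sum>k<N. osc k / w)"
proof -
  show ie: "integrable lborel E" unfolding E_def
    by (rule Bochner_Integration.integrable_add; rule Bochner_Integration.integrable_sum; rule int_ind)
  have le: "z k \<le> z (Suc k)" for k using zm by (simp add: strict_mono_less_eq)
  have "integral\<^sup>L lborel E = (\<Sum>k<N. integral\<^sup>L lborel (\<lambda>x. osc k * indicator {z k..<z (Suc k)} x))
     + (\<Sum>k<N. integral\<^sup>L lborel (\<lambda>x. osc k * indicator {z (Suc k)..<z (Suc k) + 1/w} x))"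
    unfolding E_def
    apply (subst Bochner_Integration.integral_add)
      apply (rule Bochner_Integration.integrable_sum, rule int_ind)
     apply (rule Bochner_Integration.integrable_sum, rule int_ind)
    apply (subst Bochner_Integration.integral_sum, rule int_ind)
    apply (subst Bochner_Integration.integral_sum, rule int_ind)
    ..
  also have "\<dots> = (\<Sum>k<N. osc k * (z (Suc k) - z k)) + (\<Sum>k<N. osc k / w)"
    using le w by simp
  finally show "integral\<^sup>L lborel E = (\<Sum>k<N. osc k * (z (Suc k) - z k)) + (\<Sum>k<N. osc k / w)" .
qed

lemma integ_bound:
  fixes f E :: "real \<Rightarrow> real"
  assumes "integrable lborel E" "A \<in> sets lborel" "f \<in> borel_measurable borel" "\<And>x. \<bar>f x\<bar> \<le> E x"
  shows "set_integrable lborel A f" "(LINT x:A|lborel. \<bar>f x\<bar>) \<le> integral\<^sup>L lborel E"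
proof -
  have E0: "E x \<ge> 0" for x using assms(4)[of x] by linarith
  have mA: "A \<in> sets lborel" by fact
  show si: "set_integrable lborel A f"
    unfolding set_integrable_def
    apply (rule Bochner_Integration.integrable_bound[OF assms(1)])
    using assms(3) mA apply measurable
    using assms(4) E0 by (auto simp: indicator_def)
  show "(LINT x:A|lborel. \<bar>f x\<bar>) \<le> integral\<^sup>L lborel E"
    unfolding set_lebesgue_integral_def
    apply (rule integral_mono)
    using set_integrable_abs[OF si] apply (simp add: set_integrable_def)
    using assms(1) apply simp
    using assms(4) E0 by (auto simp: indicator_def)
qed

lemma support_pq:
  assumes "compact_support_in u0 {0<..<1}"
  shows "\<exists>p q. 0 < p \<and> p < q \<and> q < (1::real) \<and> (\<forall>y. y \<le> p \<or> y \<ge> q \<longrightarrow> u0ext u0 y = 0)"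
proof -
  define S where "S = closure {x\<in>{0<..<1::real}. u0 x \<noteq> 0}"
  have cs: "compact S \<and> S \<subseteq> {0<..<1}" using assms unfolding compact_support_in_def S_def .
  have cS: "compact S" and sS: "S \<subseteq> {0<..<1}" using cs by blast+
  have sub: "x \<in> S" if "x \<in> {0<..<1}" "u0 x \<noteq> 0" for x
  proof -
    have "x \<in> {x\<in>{0<..<1::real}. u0 x \<noteq> 0}" using that by simp
    then show ?thesis unfolding S_def by (rule subsetD[OF closure_subset])
  qed
  show ?thesis
  proof (cases "S = {}")
    case True
    have "u0ext u0 y = 0" for y
      using sub[of y] True unfolding u0ext_def by auto
    moreover have "0 < (1/4::real)" "(1/4::real) < 3/4" "(3/4::real) < 1" by auto
    ultimately show ?thesis by blast
  next
    case False
    obtain a where a: "a \<in> S" "\<forall>y\<in>S. a \<le> y" using compact_attains_inf[OF cS False] by blast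
    obtain b where b: "b \<in> S" "\<forall>y\<in>S. y \<le> b" using compact_attains_sup[OF cS False] by blast
    have "a \<in> {0<..<1}" "b \<in> {0<..<1}" using a(1) b(1) sS by (auto simp del: greaterThanLessThan_iff)
    then have ab: "0 < a" "a \<le> b" "b < 1" using a(2) b(1) by auto
    have main: "u0ext u0 y = 0" if y: "y \<le> a/2 \<or> (b+1)/2 \<le> y" for y
    proof (rule ccontr)
      assume "u0ext u0 y \<noteq> 0"
      then have "y \<in> {0<..<1}" "u0 y \<noteq> 0" unfolding u0ext_def by (auto split: if_splits)
      then have "y \<in> S" using sub by blast
      then have "a \<le> y" "y \<le> b" using a b by auto
      then show False using y ab by auto
    qed
    have "0 < a/2" "a/2 < (b+1)/2" "(b+1)/2 < 1" using ab by auto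
    then show ?thesis using main by blast
  qed
qed

locale sett =
  fixes F u0 :: "real \<Rightarrow> real" and p q :: real
  assumes sm: "smooth_fun F" and c1: "u0 C1_differentiable_on {0<..<1}"
    and pq: "0 < p" "p < q" "q < 1" and z: "\<And>y. y \<le> p \<or> y \<ge> q \<Longrightarrow> u0ext u0 y = 0"
begin

lemma u0_diff: "x \<in> {0<..<1} \<Longrightarrow> u0 differentiable at x"
  using c1 by (auto simp: C1_differentiable_on_eq)

lemma u0_deriv: "x \<in> {0<..<1} \<Longrightarrow> DERIV u0 x :> deriv u0 x"
  by (simp add: DERIV_deriv_iff_real_differentiable u0_diff)

lemma u0_cont: "x \<in> {0<..<1} \<Longrightarrow> isCont u0 x"
  by (rule differentiable_imp_continuous_within[OF u0_diff])

lemma u0_cont_on: "continuous_on {p..q} u0"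
  using u0_cont pq by (intro continuous_at_imp_continuous_on) auto

lemma u0ext_cont: "isCont (u0ext u0) x"
proof -
  consider "x \<in> {0<..<1}" | "x \<le> 0" | "x \<ge> 1" by force
  then show ?thesis
  proof cases
    case 1
    have ev: "eventually (\<lambda>y. u0ext u0 y = u0 y) (nhds x)"
      using 1 by (intro eventually_nhds_in_open[of "{0<..<1}", THEN eventually_mono]) (auto simp: u0ext_def)
    show ?thesis using isCont_cong[OF ev] u0_cont[OF 1] by simp
  next
    case 2
    have ev: "eventually (\<lambda>y. u0ext u0 y = 0) (nhds x)"
      using 2 pq by (intro eventually_nhds_in_open[of "{..<p}", THEN eventually_mono]) (auto intro: z)
    show ?thesis using isCont_cong[OF ev] by simp
  next
    case 3
    have ev: "eventually (\<lambda>y. u0ext u0 y = 0) (nhds x)"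
      using 3 pq by (intro eventually_nhds_in_open[of "{q<..}", THEN eventually_mono]) (auto intro: z)
    show ?thesis using isCont_cong[OF ev] by simp
  qed
qed

lemma u0ext_eq: "y \<in> {p..q} \<Longrightarrow> u0ext u0 y = u0 y"
  using pq by (auto simp: u0ext_def)

lemma u0_zero: "y \<in> {0<..<1} \<Longrightarrow> y \<notin> {p..q} \<Longrightarrow> u0 y = 0"
  using z[of y] by (auto simp: u0ext_def)

lemma dF: "DERIV (deriv F) x :> deriv (deriv F) x"
proof -
  have "\<forall>x. ((deriv ^^ 1) F) differentiable (at x)" using sm unfolding smooth_fun_def by (rule spec)
  then have "((deriv ^^ 1) F) differentiable (at x)" by (rule spec)
  then show ?thesis by (simp add: DERIV_deriv_iff_real_differentiable)
qed

lemma ddF_cont: "isCont (deriv (deriv F)) x"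
proof -
  have "\<forall>x. ((deriv ^^ 2) F) differentiable (at x)" using sm unfolding smooth_fun_def by (rule spec)
  then have "((deriv ^^ 2) F) differentiable (at x)" by (rule spec)
  then show ?thesis by (simp add: numeral_2_eq_2 differentiable_imp_continuous_within)
qed

lemma dF_cont: "isCont (deriv F) x"
  by (rule DERIV_isCont[OF dF])

lemma du0_cont: "continuous_on {0<..<1} (deriv u0)"
proof -
  have "continuous_on {0<..<1} (\<lambda>x. vector_derivative u0 (at x))" using c1 by (simp add: C1_differentiable_on_eq)
  moreover have "\<And>x. x \<in> {0<..<1} \<Longrightarrow> vector_derivative u0 (at x) = deriv u0 x"
    using u0_deriv by (simp add: has_real_derivative_iff_has_vector_derivative vector_derivative_at)
  ultimately show ?thesis by (rule continuous_on_eq)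
qed

lemma du0_zero: "x \<in> {0<..<1} \<Longrightarrow> x \<notin> {p..q} \<Longrightarrow> deriv u0 x = 0"
proof -
  assume x: "x \<in> {0<..<1}" "x \<notin> {p..q}"
  show ?thesis
  proof (cases "x < p")
    case True
    have "DERIV u0 x :> 0"
      by (rule has_field_derivative_transform_within_open[of "\<lambda>_. 0" 0 x "{0<..<p}"])
         (use x True pq u0_zero in auto)
    then show ?thesis using DERIV_unique[OF u0_deriv[OF x(1)]] by simp
  next
    case False
    then have "x > q" using x by auto
    have "DERIV u0 x :> 0"
      by (rule has_field_derivative_transform_within_open[of "\<lambda>_. 0" 0 x "{q<..<1}"])
         (use x \<open>x > q\<close> pq u0_zero in auto)
    then show ?thesis using DERIV_unique[OF u0_deriv[OF x(1)]] by simp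
  qed
qed

lemma bdd_du0: "bdd_above ((\<lambda>x. \<bar>deriv u0 x\<bar>) ` {0<..<1})"
proof -
  have "continuous_on {p..q} (\<lambda>x. \<bar>deriv u0 x\<bar>)"
    using du0_cont pq by (intro continuous_intros continuous_on_subset[OF du0_cont]) auto
  then have "bounded ((\<lambda>x. \<bar>deriv u0 x\<bar>) ` {p..q})"
    by (intro compact_imp_bounded compact_continuous_image) auto
  then have "bounded (insert 0 ((\<lambda>x. \<bar>deriv u0 x\<bar>) ` {p..q}))" by simp
  then have "bdd_above (insert 0 ((\<lambda>x. \<bar>deriv u0 x\<bar>) ` {p..q}))" by (rule bounded_imp_bdd_above)
  moreover have "(\<lambda>x. \<bar>deriv u0 x\<bar>) ` {0<..<1} \<subseteq> insert 0 ((\<lambda>x. \<bar>deriv u0 x\<bar>) ` {p..q})"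
  proof
    fix v assume "v \<in> (\<lambda>x. \<bar>deriv u0 x\<bar>) ` {0<..<1}"
    then obtain x where x: "x \<in> {0<..<1}" "v = \<bar>deriv u0 x\<bar>" by blast
    show "v \<in> insert 0 ((\<lambda>x. \<bar>deriv u0 x\<bar>) ` {p..q})"
    proof (cases "x \<in> {p..q}")
      case True then show ?thesis using x by blast
    next
      case False then show ?thesis using x du0_zero[OF x(1) False] by simp
    qed
  qed
  ultimately show ?thesis by (rule bdd_above_mono)
qed

lemma range_u0: "u0 ` {0<..<1} \<subseteq> u0 ` {p..q}"
proof
  fix v assume "v \<in> u0 ` {0<..<1}"
  then obtain y where y: "y \<in> {0<..<1}" "v = u0 y" by auto
  show "v \<in> u0 ` {p..q}"
  proof (cases "y \<in> {p..q}")
    case True then show ?thesis using y by auto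
  next
    case False
    then have "v = u0 p" using y u0_zero z[of p] u0ext_eq[of p] pq by auto
    then show ?thesis using pq by auto
  qed
qed

lemma bdd_ddF: "bdd_above ((\<lambda>v. \<bar>deriv (deriv F) v\<bar>) ` (u0 ` {0<..<1}))"
proof -
  have "compact (u0 ` {p..q})" using u0_cont_on by (intro compact_continuous_image) auto
  moreover have "continuous_on (u0 ` {p..q}) (\<lambda>v. \<bar>deriv (deriv F) v\<bar>)"
    using ddF_cont by (intro continuous_at_imp_continuous_on) (auto intro!: continuous_intros)
  ultimately have "bounded ((\<lambda>v. \<bar>deriv (deriv F) v\<bar>) ` (u0 ` {p..q}))"
    by (metis compact_imp_bounded compact_continuous_image)
  then have "bdd_above ((\<lambda>v. \<bar>deriv (deriv F) v\<bar>) ` (u0 ` {p..q}))" by (rule bounded_imp_bdd_above)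
  then show ?thesis by (rule bdd_above_mono) (rule image_mono[OF range_u0])
qed

end

locale sett2 = sett +
  fixes T :: real
  assumes Tpos: "T > 0"
    and mono: "\<forall>t\<in>{0<..<T}. strict_mono_on {0<..<1} (\<lambda>y. char_map F u0 y t)"
    and bv: "bounded_variation_on u0 {0<..<1}"
begin

lemma phi_out: "y \<le> p \<or> y \<ge> q \<Longrightarrow> char_map F u0 y t = y + t * deriv F 0"
  unfolding char_map_def using z by simp

lemma phi_cont: "isCont (\<lambda>y. char_map F u0 y t) y"
proof -
  have "isCont (\<lambda>y. deriv F (u0ext u0 y)) y"
    using continuous_at_compose[OF u0ext_cont dF_cont] by (simp add: o_def)
  then show ?thesis unfolding char_map_def by (intro continuous_intros)
qed

lemma phi_smono:
  assumes t: "t \<in> {0<..<T}"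
  shows "strict_mono (\<lambda>y. char_map F u0 y t)"
proof (rule strict_monoI)
  let ?f = "\<lambda>y. char_map F u0 y t"
  let ?c = "t * deriv F 0"
  have m: "\<And>a b. a \<in> {0<..<1} \<Longrightarrow> b \<in> {0<..<1} \<Longrightarrow> a < b \<Longrightarrow> ?f a < ?f b"
  proof -
    fix a b :: real assume ab: "a \<in> {0<..<1}" "b \<in> {0<..<1}" "a < b"
    have smo: "strict_mono_on {0<..<1} ?f" using mono t by blast
    show "?f a < ?f b" by (rule strict_mono_onD[OF smo ab])
  qed
  fix y1 y2 :: real assume y: "y1 < y2"
  have p1: "p \<in> {0<..<1}" "q \<in> {0<..<1}" using pq by auto
  show "?f y1 < ?f y2"
  proof (cases "y1 \<in> {0<..<1} \<and> y2 \<in> {0<..<1}")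
    case True then show ?thesis using m y by blast
  next
    case False
    show ?thesis
    proof (cases "y2 \<le> p \<or> y1 \<ge> q")
      case True
      then have "y1 \<le> p \<or> y1 \<ge> q" "y2 \<le> p \<or> y2 \<ge> q" using y by auto
      then show ?thesis using phi_out[of y1 t] phi_out[of y2 t] y by simp
    next
      case F2: False
      then have y2p: "y2 > p" and y1q: "y1 < q" by auto
      show ?thesis
      proof (cases "y1 \<le> 0")
        case True
        have a: "?f y1 = y1 + ?c" using phi_out[of y1 t] True pq by simp
        show ?thesis
        proof (cases "y2 \<ge> 1")
          case True
          then show ?thesis using a phi_out[of y2 t] y pq by simp
        next
          case False
          then have "y2 \<in> {0<..<1}" using y2p pq by auto
          then have "?f p < ?f y2" using m p1 y2p by blast
          moreover have "?f p = p + ?c" using phi_out[of p t] by simp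
          ultimately show ?thesis using a True pq by simp
        qed
      next
        case y10: False
        then have y11: "y1 \<in> {0<..<1}" using y1q pq by auto
        then have "y2 \<ge> 1" using False y y2p pq by auto
        then have b: "?f y2 = y2 + ?c" using phi_out[of y2 t] pq by simp
        have "?f y1 < ?f q" using m p1 y11 y1q by blast
        moreover have "?f q = q + ?c" using phi_out[of q t] by simp
        ultimately show ?thesis using b \<open>y2 \<ge> 1\<close> pq by simp
      qed
    qed
  qed
qed

lemma phi_surj: "\<exists>y. char_map F u0 y t = x"
proof -
  let ?f = "\<lambda>y. char_map F u0 y t"
  let ?c = "t * deriv F 0"
  define a where "a = min 0 (x - ?c)"
  define b where "b = max 1 (x - ?c)"
  have fa: "?f a = a + ?c" using phi_out[of a t] pq by (simp add: a_def)
  have fb: "?f b = b + ?c" using phi_out[of b t] pq by (simp add: b_def)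
  have "?f a \<le> x" "x \<le> ?f b" "a \<le> b" using fa fb by (auto simp: a_def b_def)
  moreover have "continuous_on {a..b} ?f"
    using phi_cont by (intro continuous_at_imp_continuous_on) auto
  ultimately show ?thesis using IVT'[of ?f a x b] by blast
qed

definition psi :: "real \<Rightarrow> real \<Rightarrow> real" where
  "psi t x = (THE y. char_map F u0 y t = x)"

lemma psi:
  assumes t: "t \<in> {0<..<T}"
  shows "char_map F u0 (psi t x) t = x" "classical_solution F u0 x t = u0ext u0 (psi t x)"
proof -
  have ex1: "\<exists>!y. char_map F u0 y t = x"
  proof -
    obtain y where y: "char_map F u0 y t = x" using phi_surj by blast
    have "\<And>y'. char_map F u0 y' t = x \<Longrightarrow> y' = y"
      using strict_mono_eq[OF phi_smono[OF t]] y by metis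
    then show ?thesis using y by blast
  qed
  show a: "char_map F u0 (psi t x) t = x" unfolding psi_def by (rule theI'[OF ex1])
  show "classical_solution F u0 x t = u0ext u0 (psi t x)"
    unfolding classical_solution_def psi_def using ex1 by auto
qed

lemma psi_mono:
  assumes t: "t \<in> {0<..<T}"
  shows "mono (psi t)"
proof (rule monoI)
  fix x1 x2 :: real assume "x1 \<le> x2"
  then have "char_map F u0 (psi t x1) t \<le> char_map F u0 (psi t x2) t" using psi(1)[OF t] by simp
  then show "psi t x1 \<le> psi t x2" using strict_mono_less_eq[OF phi_smono[OF t]] by blast
qed

lemma psi_le_iff:
  assumes t: "t \<in> {0<..<T}"
  shows "psi t x < y \<longleftrightarrow> x < char_map F u0 y t"
proof -
  have "psi t x < y \<longleftrightarrow> char_map F u0 (psi t x) t < char_map F u0 y t"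
    using strict_mono_less[OF phi_smono[OF t]] by blast
  then show ?thesis using psi(1)[OF t] by simp
qed

lemma cs_meas:
  assumes t: "t \<in> {0<..<T}"
  shows "(\<lambda>x. classical_solution F u0 x t) \<in> borel_measurable borel"
proof -
  have "psi t \<in> borel_measurable borel" by (rule borel_measurable_mono[OF psi_mono[OF t]])
  moreover have "u0ext u0 \<in> borel_measurable borel"
    by (rule borel_measurable_continuous_onI) (simp add: continuous_at_imp_continuous_on u0ext_cont)
  ultimately have "(\<lambda>x. u0ext u0 (psi t x)) \<in> borel_measurable borel" by measurable
  then show ?thesis using psi(2)[OF t] by simp
qed

end

context sett2 begin

abbreviation "AA \<equiv> (SUP v\<in>u0 ` {0<..<1}. \<bar>deriv (deriv F) v\<bar>)"
abbreviation "BB \<equiv> (SUP x\<in>{0<..<1}. \<bar>deriv u0 x\<bar>)"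
abbreviation "TV \<equiv> total_variation u0 {0<..<1}"

lemma pq_sub: "{p..q} \<subseteq> {0<..<1}" using pq by auto

lemma AA_ge: "v \<in> u0 ` {0<..<1} \<Longrightarrow> \<bar>deriv (deriv F) v\<bar> \<le> AA"
  by (rule cSUP_upper[OF _ bdd_ddF])

lemma BB_ge: "x \<in> {0<..<1} \<Longrightarrow> \<bar>deriv u0 x\<bar> \<le> BB"
  by (rule cSUP_upper[OF _ bdd_du0])

lemma AA_nn: "AA \<ge> 0"
proof -
  have "u0 p \<in> u0 ` {0<..<1}" using pq by auto
  then show ?thesis using AA_ge[of "u0 p"] by linarith
qed

lemma BB_nn: "BB \<ge> 0"
proof -
  have "p \<in> {0<..<1}" using pq by auto
  then show ?thesis using BB_ge[of p] by linarith
qed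

lemma TV_ge: "sorted xs \<Longrightarrow> set xs \<subseteq> {0<..<1} \<Longrightarrow>
   (\<Sum>i<length xs - 1. \<bar>u0 (xs ! Suc i) - u0 (xs ! i)\<bar>) \<le> TV"
  unfolding total_variation_def
  by (rule cSup_upper) (use bv in \<open>auto simp: bounded_variation_on_def variation_sums_def\<close>)

lemma TV_nn: "TV \<ge> 0"
  using TV_ge[of "[]"] by simp

lemma Lip_u0:
  assumes "p \<le> a" "a \<le> b" "b \<le> q"
  shows "\<bar>u0 b - u0 a\<bar> \<le> BB * (b - a)"
proof (cases "a = b")
  case True then show ?thesis by simp
next
  case False
  then have ab: "a < b" using assms by simp
  obtain zz where zz: "a < zz" "zz < b" "u0 b - u0 a = (b - a) * deriv u0 zz"
    using MVT2[OF ab, of u0 "deriv u0"] u0_deriv assms pq by force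
  have "zz \<in> {0<..<1}" using zz assms pq by auto
  then have "\<bar>deriv u0 zz\<bar> \<le> BB" by (rule BB_ge)
  then show ?thesis using zz ab by (simp add: abs_mult mult.commute mult_left_mono)
qed

lemma Lip_dF:
  assumes a: "a \<in> {p..q}" and b: "b \<in> {p..q}"
  shows "\<bar>deriv F (u0 b) - deriv F (u0 a)\<bar> \<le> AA * \<bar>u0 b - u0 a\<bar>"
proof -
  have conn: "connected (u0 ` {p..q})" using u0_cont_on by (intro connected_continuous_image) auto
  have key: "\<bar>deriv F hi - deriv F lo\<bar> \<le> AA * (hi - lo)"
    if hl: "lo \<in> u0 ` {p..q}" "hi \<in> u0 ` {p..q}" "lo \<le> hi" for lo hi
  proof (cases "lo = hi")
    case True then show ?thesis by simp
  next
    case False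
    then have lh: "lo < hi" using hl by simp
    obtain zz where zz: "lo < zz" "zz < hi" "deriv F hi - deriv F lo = (hi - lo) * deriv (deriv F) zz"
      using MVT2[OF lh, of "deriv F" "deriv (deriv F)"] dF by blast
    have "zz \<in> u0 ` {p..q}" using connectedD_interval[OF conn hl(1) hl(2)] zz by simp
    then have "zz \<in> u0 ` {0<..<1}" using pq_sub by blast
    then have "\<bar>deriv (deriv F) zz\<bar> \<le> AA" by (rule AA_ge)
    then show ?thesis using zz lh by (simp add: abs_mult mult.commute mult_left_mono)
  qed
  have ua: "u0 a \<in> u0 ` {p..q}" and ub: "u0 b \<in> u0 ` {p..q}" using a b by auto
  show ?thesis
  proof (cases "u0 a \<le> u0 b")
    case True then show ?thesis using key[OF ua ub True] by simp
  next
    case False then show ?thesis using key[OF ub ua] by (simp add: abs_minus_commute)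
  qed
qed

end

lemma sum_pairs: "(\<Sum>j<2*N. f j) = (\<Sum>k<N. f (2*k) + f (2*k+1))" for f :: "nat \<Rightarrow> real"
  by (induction N) (simp_all add: numeral_2_eq_2 add.assoc)

context sett2 begin

definition hh :: "nat \<Rightarrow> real" where "hh N = (q - p) / real N"
definition yk :: "nat \<Rightarrow> nat \<Rightarrow> real" where "yk N k = p + real k * hh N"
definition vk :: "nat \<Rightarrow> nat \<Rightarrow> real" where "vk N k = u0ext u0 (yk N k)"
definition sk :: "nat \<Rightarrow> nat \<Rightarrow> real" where "sk N k = deriv F (vk N k)"
definition xi :: "nat \<Rightarrow> nat \<Rightarrow> real" where
  "xi N k = (SOME x. x \<in> {yk N k..yk N (Suc k)} \<and>
      (\<forall>y\<in>{yk N k..yk N (Suc k)}. \<bar>u0ext u0 y - vk N k\<bar> \<le> \<bar>u0ext u0 x - vk N k\<bar>))"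
definition osc :: "nat \<Rightarrow> nat \<Rightarrow> real" where "osc N k = \<bar>u0ext u0 (xi N k) - vk N k\<bar>"

definition ee :: "nat \<Rightarrow> nat \<Rightarrow> real" where
  "ee N j = (if even j then 1 else -1) * (vk N (j div 2 + 1) - vk N (j div 2))"
definition cc0 :: "nat \<Rightarrow> nat \<Rightarrow> real" where
  "cc0 N j = - (real N * yk N (j div 2 + 1)) - (if even j then 0 else 1)"
definition cc1 :: "nat \<Rightarrow> nat \<Rightarrow> real" where
  "cc1 N j = - (real N * sk N (j div 2 + 1))"

lemma hh_pos: "N \<ge> 1 \<Longrightarrow> hh N > 0" using pq by (simp add: hh_def)
lemma hh_le: "N \<ge> 1 \<Longrightarrow> hh N \<le> 1 / real N"
  using pq unfolding hh_def by (intro divide_right_mono) auto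

lemma yk_smono: "N \<ge> 1 \<Longrightarrow> strict_mono (yk N)"
  using hh_pos by (intro strict_monoI) (simp add: yk_def mult_strict_right_mono)

lemma yk_0: "yk N 0 = p" by (simp add: yk_def)
lemma yk_N: "N \<ge> 1 \<Longrightarrow> yk N N = q" by (simp add: yk_def hh_def)

lemma yk_range: assumes "N \<ge> 1" "k \<le> N" shows "yk N k \<in> {p..q}"
proof -
  have "yk N 0 \<le> yk N k" "yk N k \<le> yk N N"
    using strict_mono_less_eq[OF yk_smono[OF assms(1)]] assms by auto
  then show ?thesis using yk_0 yk_N[OF assms(1)] by simp
qed

lemma xi: assumes "N \<ge> 1"
  shows "xi N k \<in> {yk N k..yk N (Suc k)}"
    "\<And>y. y \<in> {yk N k..yk N (Suc k)} \<Longrightarrow> \<bar>u0ext u0 y - vk N k\<bar> \<le> osc N k"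
proof -
  have le: "yk N k \<le> yk N (Suc k)" using strict_mono_less_eq[OF yk_smono[OF assms]] by simp
  have "continuous_on {yk N k..yk N (Suc k)} (\<lambda>y. \<bar>u0ext u0 y - vk N k\<bar>)"
    using u0ext_cont by (intro continuous_at_imp_continuous_on) (auto intro!: continuous_intros)
  then have "\<exists>x\<in>{yk N k..yk N (Suc k)}. \<forall>y\<in>{yk N k..yk N (Suc k)}. \<bar>u0ext u0 y - vk N k\<bar> \<le> \<bar>u0ext u0 x - vk N k\<bar>"
    using le by (intro continuous_attains_sup) auto
  then have "xi N k \<in> {yk N k..yk N (Suc k)} \<and>
      (\<forall>y\<in>{yk N k..yk N (Suc k)}. \<bar>u0ext u0 y - vk N k\<bar> \<le> \<bar>u0ext u0 (xi N k) - vk N k\<bar>)"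
    unfolding xi_def Bex_def by (rule someI_ex)
  then show "xi N k \<in> {yk N k..yk N (Suc k)}"
    "\<And>y. y \<in> {yk N k..yk N (Suc k)} \<Longrightarrow> \<bar>u0ext u0 y - vk N k\<bar> \<le> osc N k"
    unfolding osc_def by auto
qed

lemma osc_nn: "osc N k \<ge> 0" by (simp add: osc_def)

lemma sum_osc: assumes N: "N \<ge> 1" shows "(\<Sum>k<N. osc N k) \<le> TV"
proof -
  define f where "f i = (if even i then yk N (i div 2) else xi N (i div 2))" for i
  define xs where "xs = map f [0..<2*N]"
  have fS: "f i \<le> f (Suc i)" for i
  proof (cases "even i")
    case True
    then have "Suc i div 2 = i div 2" by presburger
    then show ?thesis using True xi(1)[OF N, of "i div 2"] by (simp add: f_def)
  next
    case False
    then have "Suc i div 2 = Suc (i div 2)" by presburger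
    then show ?thesis using False xi(1)[OF N, of "i div 2"] by (simp add: f_def)
  qed
  then have fm: "mono f" by (rule mono_iff_le_Suc[THEN iffD2, rule_format])
  have sorted: "sorted xs" unfolding xs_def sorted_iff_nth_mono
    using fm by (auto simp: monoD)
  have frange: "f i \<in> {p..q}" if "i < 2*N" for i
  proof -
    have k: "i div 2 < N" using that by simp
    have a: "yk N (i div 2) \<in> {p..q}" "yk N (Suc (i div 2)) \<in> {p..q}" using yk_range[OF N] k by auto
    show ?thesis using a xi(1)[OF N, of "i div 2"] by (auto simp: f_def)
  qed
  have set: "set xs \<subseteq> {0<..<1}" unfolding xs_def using frange pq_sub by auto
  have len: "length xs - 1 = 2*N - 1" by (simp add: xs_def)
  have "(\<Sum>k<N. osc N k) = (\<Sum>k<N. \<bar>u0 (f (Suc (2*k))) - u0 (f (2*k))\<bar>)"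
  proof (rule sum.cong[OF refl])
    fix k assume k: "k \<in> {..<N}"
    have "Suc (2*k) < 2*N" "2*k < 2*N" using k by auto
    then have "u0ext u0 (f (Suc (2*k))) = u0 (f (Suc (2*k)))" "u0ext u0 (f (2*k)) = u0 (f (2*k))"
      using frange u0ext_eq by blast+
    then show "osc N k = \<bar>u0 (f (Suc (2*k))) - u0 (f (2*k))\<bar>"
      by (simp add: osc_def vk_def f_def)
  qed
  also have "\<dots> = (\<Sum>i\<in>(\<lambda>k. 2*k) ` {..<N}. \<bar>u0 (f (Suc i)) - u0 (f i)\<bar>)"
    by (subst sum.reindex) (auto simp: inj_on_def)
  also have "\<dots> \<le> (\<Sum>i<2*N-1. \<bar>u0 (f (Suc i)) - u0 (f i)\<bar>)"
    by (rule sum_mono2) auto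
  also have "\<dots> = (\<Sum>i<length xs - 1. \<bar>u0 (xs ! Suc i) - u0 (xs ! i)\<bar>)"
    unfolding len by (rule sum.cong[OF refl]) (auto simp: xs_def)
  also have "\<dots> \<le> TV" by (rule TV_ge[OF sorted set])
  finally show ?thesis .
qed

end

context sett2 begin

lemma net_formula:
  "lrnr_h [1, 2*N, 1] 3 (mkU (2*N) (real N) (ee N)) (mkV (2*N) (cc0 N) (cc1 N)) (gam t) (tht t) x =
   (\<Sum>k<N. (vk N (Suc k) - vk N k) * rmp (real N) (char_map F u0 (yk N (Suc k)) t) x)"
proof -
  have "lrnr_h [1, 2*N, 1] 3 (mkU (2*N) (real N) (ee N)) (mkV (2*N) (cc0 N) (cc1 N)) (gam t) (tht t) x
    = (\<Sum>k<N. ee N (2*k) * max 0 (real N * x + (t * cc1 N (2*k) + cc0 N (2*k)))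
         + ee N (2*k+1) * max 0 (real N * x + (t * cc1 N (2*k+1) + cc0 N (2*k+1))))"
    by (simp only: net_eval sum_pairs)
  also have "\<dots> = (\<Sum>k<N. (vk N (Suc k) - vk N k) * rmp (real N) (char_map F u0 (yk N (Suc k)) t) x)"
  proof (rule sum.cong[OF refl])
    fix k :: nat
    have d1: "(2*k) div 2 = k" "(2*k+1) div 2 = k" by presburger+
    have e1: "real N * x + (t * - (real N * sk N (Suc k)) + (- (real N * yk N (Suc k)) - 0))
       = real N * (x - char_map F u0 (yk N (Suc k)) t)"
      by (simp add: char_map_def sk_def vk_def algebra_simps)
    have e2: "real N * x + (t * - (real N * sk N (Suc k)) + (- (real N * yk N (Suc k)) - 1))
       = real N * (x - char_map F u0 (yk N (Suc k)) t) - 1"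
      by (simp add: char_map_def sk_def vk_def algebra_simps)
    show "ee N (2*k) * max 0 (real N * x + (t * cc1 N (2*k) + cc0 N (2*k)))
         + ee N (2*k+1) * max 0 (real N * x + (t * cc1 N (2*k+1) + cc0 N (2*k+1)))
       = (vk N (Suc k) - vk N k) * rmp (real N) (char_map F u0 (yk N (Suc k)) t) x"
      unfolding ee_def cc0_def cc1_def d1 rmp_def
      using e1 e2 by (simp add: algebra_simps)
  qed
  finally show ?thesis .
qed

lemma main_est:
  assumes N: "N \<ge> 1" and t: "t \<in> {0<..<T}"
  defines "H \<equiv> lrnr_h [1, 2*N, 1] 3 (mkU (2*N) (real N) (ee N)) (mkV (2*N) (cc0 N) (cc1 N)) (gam t) (tht t)"
  shows "set_integrable lborel {0<..<1} (\<lambda>x. classical_solution F u0 x t - H x)"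
    "(LINT x:{0<..<1}|lborel. \<bar>classical_solution F u0 x t - H x\<bar>) \<le> 2 / real N * TV * (1 + T * AA * BB)"
proof -
  define z where "z k = char_map F u0 (yk N k) t" for k
  define u where "u x = classical_solution F u0 x t" for x
  define w where "w = real N"
  have w: "w > 0" using N by (simp add: w_def)
  have zm: "strict_mono z" unfolding z_def
    using phi_smono[OF t] yk_smono[OF N] by (simp add: strict_mono_def)
  have uE: "u x = u0ext u0 (psi t x)" for x using psi(2)[OF t] by (simp add: u_def)
  have Hf: "H x = (\<Sum>k<N. (vk N (Suc k) - vk N k) * rmp w (z (Suc k)) x)" for x
    unfolding H_def net_formula z_def w_def ..
  have pw: "\<bar>u x - H x\<bar>
     \<le> (\<Sum>k<N. osc N k * indicator {z k..<z (Suc k)} x) + (\<Sum>k<N. osc N k * indicator {z (Suc k)..<z (Suc k) + 1/w} x)" for x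
    unfolding Hf
  proof (rule core_pointwise[OF zm w osc_nn])
    fix x assume "x < z 0"
    then have "psi t x < p" using psi_le_iff[OF t] yk_0 by (simp add: z_def)
    then show "u x = 0" using uE z by simp
  next
    fix x assume "x \<ge> z N"
    then have "\<not> psi t x < q" using psi_le_iff[OF t] yk_N[OF N] by (simp add: z_def)
    then show "u x = 0" using uE z by simp
  next
    show "vk N 0 = 0" using z yk_0 by (simp add: vk_def)
  next
    show "vk N N = 0" using z yk_N[OF N] by (simp add: vk_def)
  next
    fix k x assume k: "k < N" "z k \<le> x" "x < z (Suc k)"
    have "\<not> psi t x < yk N k" "psi t x < yk N (Suc k)"
      using k psi_le_iff[OF t] by (auto simp: z_def)
    then have "psi t x \<in> {yk N k..yk N (Suc k)}" by simp
    then show "\<bar>u x - vk N k\<bar> \<le> osc N k" using xi(2)[OF N] uE by simp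
  next
    fix k assume "k < N"
    have "yk N (Suc k) \<in> {yk N k..yk N (Suc k)}"
      using strict_mono_less_eq[OF yk_smono[OF N]] by simp
    then show "\<bar>vk N (Suc k) - vk N k\<bar> \<le> osc N k" using xi(2)[OF N] by (simp add: vk_def)
  qed
  define E where "E x = (\<Sum>k<N. osc N k * indicator {z k..<z (Suc k)} x) + (\<Sum>k<N. osc N k * indicator {z (Suc k)..<z (Suc k) + 1/w} x)" for x
  have Eint: "integrable lborel E" "integral\<^sup>L lborel E = (\<Sum>k<N. osc N k * (z (Suc k) - z k)) + (\<Sum>k<N. osc N k / w)"
    using integ_E[OF zm w, of "osc N" N] unfolding E_def by auto
  have Hm: "H \<in> borel_measurable borel" unfolding Hf rmp_def by measurable
  have um: "u \<in> borel_measurable borel" using cs_meas[OF t] by (simp add: u_def[abs_def])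
  have fm: "(\<lambda>x. u x - H x) \<in> borel_measurable borel" using Hm um by measurable
  have ib: "set_integrable lborel {0<..<1} (\<lambda>x. u x - H x)"
     "(LINT x:{0<..<1}|lborel. \<bar>u x - H x\<bar>) \<le> integral\<^sup>L lborel E"
    using integ_bound[OF Eint(1) _ fm, of "{0<..<1}"] pw unfolding E_def by auto
  then show "set_integrable lborel {0<..<1} (\<lambda>x. classical_solution F u0 x t - H x)"
    by (simp add: u_def)
  have len: "z (Suc k) - z k \<le> hh N * (1 + T * AA * BB)" if k: "k < N" for k
  proof -
    have r: "yk N k \<in> {p..q}" "yk N (Suc k) \<in> {p..q}" using yk_range[OF N] k by auto
    have dy: "yk N (Suc k) - yk N k = hh N" by (simp add: yk_def algebra_simps)
    have "\<bar>u0 (yk N (Suc k)) - u0 (yk N k)\<bar> \<le> BB * hh N"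
      using Lip_u0[of "yk N k" "yk N (Suc k)"] r dy strict_mono_less_eq[OF yk_smono[OF N]] by simp
    moreover have "\<bar>deriv F (u0 (yk N (Suc k))) - deriv F (u0 (yk N k))\<bar> \<le> AA * \<bar>u0 (yk N (Suc k)) - u0 (yk N k)\<bar>"
      by (rule Lip_dF[OF r(1) r(2)])
    ultimately have "\<bar>deriv F (u0 (yk N (Suc k))) - deriv F (u0 (yk N k))\<bar> \<le> AA * (BB * hh N)"
      using AA_nn by (meson mult_left_mono order_trans)
    then have "t * (deriv F (u0 (yk N (Suc k))) - deriv F (u0 (yk N k))) \<le> T * (AA * (BB * hh N))"
    proof -
      assume h: "\<bar>deriv F (u0 (yk N (Suc k))) - deriv F (u0 (yk N k))\<bar> \<le> AA * (BB * hh N)"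
      have "t * (deriv F (u0 (yk N (Suc k))) - deriv F (u0 (yk N k)))
          \<le> t * \<bar>deriv F (u0 (yk N (Suc k))) - deriv F (u0 (yk N k))\<bar>"
        using t by (intro mult_left_mono) auto
      also have "\<dots> \<le> T * (AA * (BB * hh N))"
        using t h by (intro mult_mono) auto
      finally show ?thesis .
    qed
    moreover have "z (Suc k) - z k = hh N + t * (deriv F (u0 (yk N (Suc k))) - deriv F (u0 (yk N k)))"
      using u0ext_eq r dy by (simp add: z_def char_map_def algebra_simps)
    ultimately show ?thesis by (simp add: algebra_simps)
  qed
  define S where "S = (\<Sum>k<N. osc N k)"
  have S: "S \<le> TV" "S \<ge> 0" using sum_osc[OF N] osc_nn by (auto simp: S_def intro: sum_nonneg)
  have G: "1 + T * AA * BB \<ge> 1" using Tpos AA_nn BB_nn by simp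
  have "(\<Sum>k<N. osc N k * (z (Suc k) - z k)) \<le> (\<Sum>k<N. osc N k * (hh N * (1 + T * AA * BB)))"
    using len osc_nn by (intro sum_mono mult_left_mono) auto
  also have "\<dots> = S * (hh N * (1 + T * AA * BB))" by (simp add: S_def sum_distrib_right)
  also have "\<dots> \<le> TV * (1 / real N * (1 + T * AA * BB))"
    using S hh_le[OF N] hh_pos[OF N] G TV_nn by (intro mult_mono) auto
  finally have i1: "(\<Sum>k<N. osc N k * (z (Suc k) - z k)) \<le> TV * (1 / real N * (1 + T * AA * BB))" .
  have "(\<Sum>k<N. osc N k / w) = S / w" by (simp add: S_def sum_divide_distrib)
  also have "\<dots> \<le> TV / w" using S w by (simp add: divide_right_mono)
  also have "\<dots> \<le> TV * (1 / real N * (1 + T * AA * BB))"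
  proof -
    have "TV * 1 \<le> TV * (1 + T * AA * BB)" using TV_nn G by (intro mult_left_mono) auto
    then have "TV / w \<le> TV * (1 + T * AA * BB) / w" using w by (simp add: divide_right_mono)
    then show ?thesis by (simp add: w_def)
  qed
  finally have i2: "(\<Sum>k<N. osc N k / w) \<le> TV * (1 / real N * (1 + T * AA * BB))" .
  have "(LINT x:{0<..<1}|lborel. \<bar>u x - H x\<bar>) \<le> 2 / real N * TV * (1 + T * AA * BB)"
  proof -
    have eq: "2 / real N * TV * (1 + T*AA*BB) = TV * (1 / real N * (1 + T*AA*BB)) + TV * (1 / real N * (1 + T*AA*BB))"
      by (simp add: field_simps)
    show ?thesis using ib(2) Eint(2) i1 i2 unfolding eq by linarith
  qed
  then show "(LINT x:{0<..<1}|lborel. \<bar>classical_solution F u0 x t - H x\<bar>) \<le> 2 / real N * TV * (1 + T * AA * BB)"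
    by (simp add: u_def)
qed

end

theorem theorem4p6:
  shows "\<exists>C c1 c2 :: real. C > 0 \<and> c1 > 0 \<and> c2 > 0 \<and>
    (\<forall>(K::nat) (u0::real \<Rightarrow> real) (F::real \<Rightarrow> real) (T::real).
      K \<ge> 1 \<and> smooth_fun F \<and> strictly_convex F \<and>
      u0 C1_differentiable_on {0<..<1} \<and>
      bounded_variation_on u0 {0<..<1} \<and> compact_support_in u0 {0<..<1} \<and>
      T > 0 \<and>
      (\<forall>t\<in>{0<..<T}. strict_mono_on {0<..<1} (\<lambda>y. char_map F u0 y t))
      \<longrightarrow>
      (\<exists>ws U V Cs Ds (\<gamma>::real \<Rightarrow> nat \<Rightarrow> real list) (\<theta>::real \<Rightarrow> nat \<Rightarrow> real list).
         is_lrnr 2 ws 3 U V Cs Ds \<and>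
         c1 * real K \<le> real (lrnr_dof 2 3 U V) \<and> real (lrnr_dof 2 3 U V) \<le> c2 * real K \<and>
         c1 * real K \<le> real (lrnr_width ws) \<and> real (lrnr_width ws) \<le> c2 * real K \<and>
         (\<forall>l\<in>{1..2}. \<forall>i<3. \<exists>a b. \<forall>t. \<gamma> t l ! i = a + b * t) \<and>
         (\<forall>l\<in>{1..2}. \<forall>i<3. \<exists>a b. \<forall>t. \<theta> t l ! i = a + b * t) \<and>
         (\<forall>t\<in>{0<..<T}.
            lrnr_coeffs_ok 2 Cs Ds (\<gamma> t) (\<theta> t) \<and>
            set_integrable lborel {0<..<1}
              (\<lambda>x. classical_solution F u0 x t - lrnr_h ws 3 U V (\<gamma> t) (\<theta> t) x) \<and>
            (LINT x:{0<..<1}|lborel.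
               \<bar>classical_solution F u0 x t - lrnr_h ws 3 U V (\<gamma> t) (\<theta> t) x\<bar>)
            \<le> C / real K * total_variation u0 {0<..<1} *
               (1 + T * (SUP v\<in>u0 ` {0<..<1}. \<bar>deriv (deriv F) v\<bar>)
                      * (SUP x\<in>{0<..<1}. \<bar>deriv u0 x\<bar>)))))"
proof -
  have "\<forall>(K::nat) (u0::real \<Rightarrow> real) (F::real \<Rightarrow> real) (T::real).
      K \<ge> 1 \<and> smooth_fun F \<and> strictly_convex F \<and>
      u0 C1_differentiable_on {0<..<1} \<and>
      bounded_variation_on u0 {0<..<1} \<and> compact_support_in u0 {0<..<1} \<and>
      T > 0 \<and>
      (\<forall>t\<in>{0<..<T}. strict_mono_on {0<..<1} (\<lambda>y. char_map F u0 y t))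
      \<longrightarrow>
      (\<exists>ws U V Cs Ds (\<gamma>::real \<Rightarrow> nat \<Rightarrow> real list) (\<theta>::real \<Rightarrow> nat \<Rightarrow> real list).
         is_lrnr 2 ws 3 U V Cs Ds \<and>
         1 * real K \<le> real (lrnr_dof 2 3 U V) \<and> real (lrnr_dof 2 3 U V) \<le> 33 * real K \<and>
         1 * real K \<le> real (lrnr_width ws) \<and> real (lrnr_width ws) \<le> 33 * real K \<and>
         (\<forall>l\<in>{1..2}. \<forall>i<3. \<exists>a b. \<forall>t. \<gamma> t l ! i = a + b * t) \<and>
         (\<forall>l\<in>{1..2}. \<forall>i<3. \<exists>a b. \<forall>t. \<theta> t l ! i = a + b * t) \<and>
         (\<forall>t\<in>{0<..<T}.
            lrnr_coeffs_ok 2 Cs Ds (\<gamma> t) (\<theta> t) \<and>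
            set_integrable lborel {0<..<1}
              (\<lambda>x. classical_solution F u0 x t - lrnr_h ws 3 U V (\<gamma> t) (\<theta> t) x) \<and>
            (LINT x:{0<..<1}|lborel.
               \<bar>classical_solution F u0 x t - lrnr_h ws 3 U V (\<gamma> t) (\<theta> t) x\<bar>)
            \<le> 2 / real K * total_variation u0 {0<..<1} *
               (1 + T * (SUP v\<in>u0 ` {0<..<1}. \<bar>deriv (deriv F) v\<bar>)
                      * (SUP x\<in>{0<..<1}. \<bar>deriv u0 x\<bar>))))"
  proof (intro allI impI)
    fix K :: nat and u0 F :: "real \<Rightarrow> real" and T :: real
    assume H: "K \<ge> 1 \<and> smooth_fun F \<and> strictly_convex F \<and>
      u0 C1_differentiable_on {0<..<1} \<and>
      bounded_variation_on u0 {0<..<1} \<and> compact_support_in u0 {0<..<1} \<and>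
      T > 0 \<and>
      (\<forall>t\<in>{0<..<T}. strict_mono_on {0<..<1} (\<lambda>y. char_map F u0 y t))"
    then have K: "K \<ge> 1" and sm: "smooth_fun F" and c1: "u0 C1_differentiable_on {0<..<1}"
      and bv: "bounded_variation_on u0 {0<..<1}" and cs: "compact_support_in u0 {0<..<1}"
      and Tp: "T > 0" and mo: "\<forall>t\<in>{0<..<T}. strict_mono_on {0<..<1} (\<lambda>y. char_map F u0 y t)"
      by auto
    obtain p q where pq: "0 < p" "p < q" "q < 1" and zz: "\<forall>y. y \<le> p \<or> y \<ge> q \<longrightarrow> u0ext u0 y = 0"
      using support_pq[OF cs] by blast
    interpret S: sett2 F u0 p q T
      by unfold_locales (use sm c1 pq zz Tp mo bv in auto)
    have M1: "2 * K \<ge> 1" using K by simp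
    show "\<exists>ws U V Cs Ds (\<gamma>::real \<Rightarrow> nat \<Rightarrow> real list) (\<theta>::real \<Rightarrow> nat \<Rightarrow> real list).
         is_lrnr 2 ws 3 U V Cs Ds \<and>
         1 * real K \<le> real (lrnr_dof 2 3 U V) \<and> real (lrnr_dof 2 3 U V) \<le> 33 * real K \<and>
         1 * real K \<le> real (lrnr_width ws) \<and> real (lrnr_width ws) \<le> 33 * real K \<and>
         (\<forall>l\<in>{1..2}. \<forall>i<3. \<exists>a b. \<forall>t. \<gamma> t l ! i = a + b * t) \<and>
         (\<forall>l\<in>{1..2}. \<forall>i<3. \<exists>a b. \<forall>t. \<theta> t l ! i = a + b * t) \<and>
         (\<forall>t\<in>{0<..<T}.
            lrnr_coeffs_ok 2 Cs Ds (\<gamma> t) (\<theta> t) \<and>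
            set_integrable lborel {0<..<1}
              (\<lambda>x. classical_solution F u0 x t - lrnr_h ws 3 U V (\<gamma> t) (\<theta> t) x) \<and>
            (LINT x:{0<..<1}|lborel.
               \<bar>classical_solution F u0 x t - lrnr_h ws 3 U V (\<gamma> t) (\<theta> t) x\<bar>)
            \<le> 2 / real K * total_variation u0 {0<..<1} *
               (1 + T * (SUP v\<in>u0 ` {0<..<1}. \<bar>deriv (deriv F) v\<bar>)
                      * (SUP x\<in>{0<..<1}. \<bar>deriv u0 x\<bar>)))"
    proof (intro exI conjI)
      show "is_lrnr 2 [1, 2*K, 1] 3 (mkU (2*K) (real K) (S.ee K)) (mkV (2*K) (S.cc0 K) (S.cc1 K))
          (\<lambda>_. {v. length v = 3}) (\<lambda>_. {v. length v = 3})"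
        by (rule net_lrnr[OF M1])
      show "1 * real K \<le> real (lrnr_dof 2 3 (mkU (2*K) (real K) (S.ee K)) (mkV (2*K) (S.cc0 K) (S.cc1 K)))"
        unfolding net_dof by simp
      show "real (lrnr_dof 2 3 (mkU (2*K) (real K) (S.ee K)) (mkV (2*K) (S.cc0 K) (S.cc1 K))) \<le> 33 * real K"
        unfolding net_dof using K by simp
      show "1 * real K \<le> real (lrnr_width [1, 2*K, 1])" unfolding net_width[OF M1] by simp
      show "real (lrnr_width [1, 2*K, 1]) \<le> 33 * real K" unfolding net_width[OF M1] by simp
      show "\<forall>l\<in>{1..2}. \<forall>i<3. \<exists>a b. \<forall>t. gam t l ! i = a + b * t" using net_lin by blast
      show "\<forall>l\<in>{1..2}. \<forall>i<3. \<exists>a b. \<forall>t. tht t l ! i = a + b * t" using net_lin by blast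
      show "\<forall>t\<in>{0<..<T}.
            lrnr_coeffs_ok 2 (\<lambda>_. {v. length v = 3}) (\<lambda>_. {v. length v = 3}) (gam t) (tht t) \<and>
            set_integrable lborel {0<..<1}
              (\<lambda>x. classical_solution F u0 x t - lrnr_h [1, 2*K, 1] 3 (mkU (2*K) (real K) (S.ee K)) (mkV (2*K) (S.cc0 K) (S.cc1 K)) (gam t) (tht t) x) \<and>
            (LINT x:{0<..<1}|lborel.
               \<bar>classical_solution F u0 x t - lrnr_h [1, 2*K, 1] 3 (mkU (2*K) (real K) (S.ee K)) (mkV (2*K) (S.cc0 K) (S.cc1 K)) (gam t) (tht t) x\<bar>)
            \<le> 2 / real K * total_variation u0 {0<..<1} *
               (1 + T * (SUP v\<in>u0 ` {0<..<1}. \<bar>deriv (deriv F) v\<bar>)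
                      * (SUP x\<in>{0<..<1}. \<bar>deriv u0 x\<bar>))"
        using net_coeffs S.main_est[OF K] by blast
    qed
  qed
  then show ?thesis by (intro exI[of _ "2::real"] exI[of _ "1::real"] exI[of _ "33::real"]) simp
qed

end
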